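(* Let $R$ be a unital commutative Hausdorff topological ring with dense group of units, $E\in\mathrm{TopSMod}_R$ and $\lambda\in\Lambda^\infty$. A subset $U\subset\underline E(\lambda)$ is open in the DeWitt topology if and only if $U=\underline E(\eta)(V)+\underline E(\lambda)^+$ for some open $V\subset E_0$; likewise $U\subset E\otimes\lambda$ is DeWitt-open if and only if $U=V\otimes1+E\otimes\lambda^+$ for some open $V\subset E$. The DeWitt topology on $\underline E(\lambda)$ is a $\lambda_0$-module topology, and the DeWitt topology on $E\otimes\lambda$ is a $\lambda$-module topology.
   Context: $\lambda^n=R[\theta_1,\dots,\theta_n]$ ($n\in\mathbb N$, $\lambda^0=R$) and $\lambda^\infty=R[\theta_i:i\in\mathbb N]$ are Grassmann algebras on odd generators ($\lambda^n=\bigoplus_IR\theta_I$ product topology; $\lambda^\infty$ direct limit topology). $\Lambda^\infty$: category with objects these algebras and morphisms even unital $R$-algebra morphisms. For $\lambda\in\Lambda^\infty$, $\varepsilon:\lambda\to R$ is the morphism killing all $\theta_i$, $\eta:R\to\lambda$ the unit map, $\lambda^+=\ker\varepsilon$. $\mathrm{TopSMod}_R$: Hausdorff graded topological $R$-modules $E=E_0\oplus E_1$. $E\otimes\lambda^N=\prod_{|I|\le N}E\theta_I$, $E\otimes\lambda^\infty=\varinjlim_NE\otimes\lambda^N$; $\underline E(\lambda)=(E\otimes\lambda)_0=E_0\otimes\lambda_0\oplus E_1\otimes\lambda_1$, $\underline E(\varphi)=(\mathrm{id}\otimes\varphi)|$, $\underline E(\lambda)^+=(E\otimes\lambda^+)_0$.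 The DeWitt topology on $\underline E(\lambda)$ (resp. $E\otimes\lambda$) is the coarsest topology for which $\underline E(\varepsilon):\underline E(\lambda)\to E_0$ (resp. $\mathrm{id}\otimes\varepsilon:E\otimes\lambda\to E$) is continuous. A $\lambda_0$-module topology is one making addition and scalar multiplication $\lambda_0\times\underline E(\lambda)\to\underline E(\lambda)$ continuous (with the given topology on $\lambda_0$). *)

theory Defs
  imports "HOL-Analysis.Analysis" "HOL-Library.Extended_Nat"
begin

(* Grassmann algebras: the basis monomial theta_I is indexed by a finite set I of
   generator indices (generators theta_0, theta_1, ...).  An element of
   lambda^n (resp. E (x) lambda^n) is a coefficient function  nat set => R
   (resp. nat set => E) vanishing outside Pow {..<n}.  lambda^infinity is
   the union (direct limit) of these.  m :: enat selects lambda^n (m = enat n)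
   or lambda^infinity (m = \<infinity>). *)

definition gcar :: "enat \<Rightarrow> (nat set \<Rightarrow> 'v::zero) set" where
  "gcar m = {f. \<exists>n. enat n \<le> m \<and> (\<forall>I. f I \<noteq> 0 \<longrightarrow> I \<subseteq> {..<n})}"

(* sign of theta_I theta_J = gsign I J * theta_(I Un J) for disjoint I, J *)
definition gsign :: "nat set \<Rightarrow> nat set \<Rightarrow> int" where
  "gsign I J = (-1) ^ card {(i, j). i \<in> I \<and> j \<in> J \<and> j < i}"

definition geven :: "(nat set \<Rightarrow> 'v::zero) set" where
  "geven = {f. \<forall>I. f I \<noteq> 0 \<longrightarrow> even (card I)}"

definition lambda0 :: "enat \<Rightarrow> (nat set \<Rightarrow> 'r::zero) set" where
  "lambda0 m = gcar m \<inter> geven"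

(* topology of lambda: product topology for lambda^n, direct limit topology
   (final topology w.r.t. the inclusions lambda^n -> lambda^infinity) for lambda^infinity *)
definition lambda_top :: "enat \<Rightarrow> (nat set \<Rightarrow> 'r::{zero,topological_space}) topology" where
  "lambda_top m = (case m of
      enat n \<Rightarrow> subtopology euclidean (gcar (enat n))
    | \<infinity> \<Rightarrow> topology (\<lambda>U. U \<subseteq> gcar \<infinity> \<and>
          (\<forall>n. openin (subtopology euclidean (gcar (enat n))) (U \<inter> gcar (enat n)))))"

(* E = E_0 (+) E_1 is modelled as 'a \<times> 'b (product topology).
   E (x) lambda: functions nat set => 'a \<times> 'b in gcar m.
   Underline E(lambda) = (E (x) lambda)_0 = E_0 (x) lambda_0 (+) E_1 (x) lambda_1 : *)
definition Eul :: "enat \<Rightarrow> (nat set \<Rightarrow> ('a::zero \<times> 'b::zero)) set" where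
  "Eul m = {f \<in> gcar m. \<forall>I. (odd (card I) \<longrightarrow> fst (f I) = 0) \<and> (even (card I) \<longrightarrow> snd (f I) = 0)}"

definition Eul_plus :: "enat \<Rightarrow> (nat set \<Rightarrow> ('a::zero \<times> 'b::zero)) set" where
  "Eul_plus m = {f \<in> Eul m. f {} = 0}"

definition Etens_plus :: "enat \<Rightarrow> (nat set \<Rightarrow> 'v::zero) set" where
  "Etens_plus m = {f \<in> gcar m. f {} = 0}"

(* v (x) 1, i.e. the map  id (x) eta;  for v in E_0 this is  Underline E(eta)(v) *)
definition tens1 :: "'v::zero \<Rightarrow> (nat set \<Rightarrow> 'v)" where
  "tens1 v = (\<lambda>I. if I = {} then v else 0)"

definition fadd :: "(nat set \<Rightarrow> 'v::plus) \<Rightarrow> (nat set \<Rightarrow> 'v) \<Rightarrow> (nat set \<Rightarrow> 'v)" where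
  "fadd f g = (\<lambda>I. f I + g I)"

(* action of a \<in> lambda on E (x) lambda by left multiplication on the lambda factor:
   theta_I . (e (x) theta_J) = e (x) theta_I theta_J *)
definition gact :: "('r::comm_ring_1 \<Rightarrow> 'a::comm_monoid_add \<Rightarrow> 'a) \<Rightarrow> ('r \<Rightarrow> 'b::comm_monoid_add \<Rightarrow> 'b)
     \<Rightarrow> (nat set \<Rightarrow> 'r) \<Rightarrow> (nat set \<Rightarrow> 'a \<times> 'b) \<Rightarrow> (nat set \<Rightarrow> 'a \<times> 'b)" where
  "gact sc0 sc1 a f = (\<lambda>K. \<Sum>I\<in>Pow K.
      (sc0 (of_int (gsign I (K - I)) * a I) (fst (f (K - I))),
       sc1 (of_int (gsign I (K - I)) * a I) (snd (f (K - I)))))"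

(* DeWitt topology on Underline E(lambda): coarsest topology making
   Underline E(epsilon) : f \<mapsto> (E_0-component of f {}) continuous *)
definition dewitt_ul :: "enat \<Rightarrow> (nat set \<Rightarrow> ('a::{zero,topological_space} \<times> 'b::zero)) topology" where
  "dewitt_ul m = pullback_topology (Eul m) (\<lambda>f. fst (f {})) euclidean"

(* DeWitt topology on E (x) lambda: coarsest topology making id (x) epsilon continuous *)
definition dewitt_tens :: "enat \<Rightarrow> (nat set \<Rightarrow> 'v::{zero,topological_space}) topology" where
  "dewitt_tens m = pullback_topology (gcar m) (\<lambda>f. f {}) euclidean"

end

theory Submission
  imports Defs "HOL-Library.Product_Plus"
begin


lemma gcar_fadd: "(f::nat set \<Rightarrow> 'v::monoid_add) \<in> gcar m \<Longrightarrow> g \<in> gcar m \<Longrightarrow> fadd f g \<in> gcar m"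
proof -
  assume "f \<in> gcar m" "g \<in> gcar m"
  then obtain n1 n2 where a: "enat n1 \<le> m" "\<forall>I. f I \<noteq> 0 \<longrightarrow> I \<subseteq> {..<n1}"
    and b: "enat n2 \<le> m" "\<forall>I. g I \<noteq> 0 \<longrightarrow> I \<subseteq> {..<n2}" unfolding gcar_def by blast
  have "enat (max n1 n2) \<le> m" using a b by (simp add: max_def)
  moreover have "\<forall>I. fadd f g I \<noteq> 0 \<longrightarrow> I \<subseteq> {..<max n1 n2}"
  proof (intro allI impI)
    fix I assume "fadd f g I \<noteq> 0"
    hence "f I \<noteq> 0 \<or> g I \<noteq> 0" unfolding fadd_def by auto
    thus "I \<subseteq> {..<max n1 n2}" using a b by fastforce
  qed
  ultimately show ?thesis unfolding gcar_def by blast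
qed

lemma gcar_tens1: "tens1 v \<in> gcar m"
  unfolding gcar_def tens1_def by (rule CollectI, rule exI[of _ 0]) (auto simp: zero_enat_def[symmetric])

lemma gcar_upd0: "f \<in> gcar m \<Longrightarrow> f(I := 0) \<in> gcar m"
  unfolding gcar_def by auto

lemma Eul_fadd: "(f::nat set \<Rightarrow> 'a::monoid_add \<times> 'b::monoid_add) \<in> Eul m \<Longrightarrow> g \<in> Eul m \<Longrightarrow> fadd f g \<in> Eul m"
  unfolding Eul_def using gcar_fadd by (auto simp: fadd_def)

lemma set_ul: "{fadd (tens1 (v, 0)) x | v x. v \<in> V \<and> x \<in> Eul_plus m}
   = {f \<in> (Eul m :: (nat set \<Rightarrow> 'a::comm_monoid_add \<times> 'b::comm_monoid_add) set). fst (f {}) \<in> V}"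
proof (intro set_eqI iffI)
  fix f :: "nat set \<Rightarrow> 'a \<times> 'b"
  assume "f \<in> {fadd (tens1 (v, 0)) x | v x. v \<in> V \<and> x \<in> Eul_plus m}"
  then obtain v x where f: "f = fadd (tens1 (v, 0)) x" "v \<in> V" "x \<in> Eul_plus m" by blast
  have "tens1 (v, 0) \<in> (Eul m :: (nat set \<Rightarrow> 'a \<times> 'b) set)"
    unfolding Eul_def using gcar_tens1 by (auto simp: tens1_def)
  moreover have "x \<in> Eul m" using f by (simp add: Eul_plus_def)
  ultimately have "f \<in> Eul m" using f Eul_fadd by blast
  with f show "f \<in> {f \<in> Eul m. fst (f {}) \<in> V}"
    by (auto simp: Eul_plus_def fadd_def tens1_def)
next
  fix f :: "nat set \<Rightarrow> 'a \<times> 'b"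
  assume "f \<in> {f \<in> Eul m. fst (f {}) \<in> V}"
  hence f: "f \<in> Eul m" "fst (f {}) \<in> V" by auto
  have "snd (f {}) = 0" using f unfolding Eul_def by auto
  hence "f = fadd (tens1 (fst (f {}), 0)) (f({} := 0))"
    by (auto simp: fadd_def tens1_def fun_eq_iff prod_eq_iff)
  moreover have "f({} := 0) \<in> Eul_plus m"
    using f gcar_upd0 unfolding Eul_plus_def Eul_def by auto
  ultimately show "f \<in> {fadd (tens1 (v, 0)) x | v x. v \<in> V \<and> x \<in> Eul_plus m}"
    using f by blast
qed

lemma set_tens: "{fadd (tens1 v) x | v x. v \<in> V \<and> x \<in> Etens_plus m}
   = {f \<in> (gcar m :: (nat set \<Rightarrow> 'a::comm_monoid_add) set). f {} \<in> V}"
proof (intro set_eqI iffI)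
  fix f :: "nat set \<Rightarrow> 'a"
  assume "f \<in> {fadd (tens1 v) x | v x. v \<in> V \<and> x \<in> Etens_plus m}"
  then obtain v x where f: "f = fadd (tens1 v) x" "v \<in> V" "x \<in> Etens_plus m" by blast
  have "x \<in> gcar m" using f by (auto simp: Etens_plus_def)
  hence "f \<in> gcar m" using f(1) gcar_tens1 gcar_fadd by metis
  with f show "f \<in> {f \<in> gcar m. f {} \<in> V}"
    by (auto simp: Etens_plus_def fadd_def tens1_def)
next
  fix f :: "nat set \<Rightarrow> 'a"
  assume "f \<in> {f \<in> gcar m. f {} \<in> V}"
  hence f: "f \<in> gcar m" "f {} \<in> V" by auto
  hence "f = fadd (tens1 (f {})) (f({} := 0))"
    by (auto simp: fadd_def tens1_def fun_eq_iff)
  moreover have "f({} := 0) \<in> Etens_plus m"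
    using f gcar_upd0 unfolding Etens_plus_def by auto
  ultimately show "f \<in> {fadd (tens1 v) x | v x. v \<in> V \<and> x \<in> Etens_plus m}"
    using f by blast
qed

lemma istop_inf: "istopology (\<lambda>U. U \<subseteq> gcar \<infinity> \<and>
          (\<forall>n. openin (subtopology euclidean (gcar (enat n))) (U \<inter> (gcar (enat n) :: (nat set \<Rightarrow> 'r::{zero,topological_space}) set))))"
  (is "istopology ?P")
proof -
  have 1: "?P (S \<inter> T)" if a: "?P S" and b: "?P T" for S T
  proof -
    have "S \<inter> T \<inter> gcar (enat n) = (S \<inter> gcar (enat n)) \<inter> (T \<inter> gcar (enat n))" for n by auto
    thus ?thesis using a b by (auto simp add: openin_Int)
  qed
  have 2: "?P (\<Union>K)" if a: "\<forall>S\<in>K. ?P S" for K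
  proof -
    have "openin (subtopology euclidean (gcar (enat n))) (\<Union>K \<inter> gcar (enat n))" for n
    proof -
      have "\<Union>K \<inter> gcar (enat n) = \<Union>((\<lambda>S. S \<inter> gcar (enat n)) ` K)" by auto
      moreover have "openin (subtopology euclidean (gcar (enat n))) (\<Union>((\<lambda>S. S \<inter> gcar (enat n)) ` K))"
        by (rule openin_Union) (use a in auto)
      ultimately show ?thesis by simp
    qed
    thus ?thesis using a by auto
  qed
  show ?thesis unfolding istopology_def using 1 2 by blast
qed

lemma openin_lambda_inf: "openin (lambda_top \<infinity>) U \<longleftrightarrow> U \<subseteq> gcar \<infinity> \<and>
          (\<forall>n. openin (subtopology euclidean (gcar (enat n))) (U \<inter> gcar (enat n)))"
  unfolding lambda_top_def enat.case by (subst topology_inverse'[OF istop_inf]) (rule refl)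

lemma topspace_lambda: "topspace (lambda_top m) = gcar m"
proof (cases m)
  case (enat n) thus ?thesis by (simp add: lambda_top_def)
next
  case infinity
  have "gcar (enat n) \<subseteq> gcar \<infinity>" for n :: nat unfolding gcar_def by auto
  hence "openin (lambda_top \<infinity>) (gcar \<infinity> :: (nat set \<Rightarrow> 'a) set)"
    unfolding openin_lambda_inf
  proof (intro conjI allI)
    fix n
    have "gcar \<infinity> \<inter> gcar (enat n) = (gcar (enat n) :: (nat set \<Rightarrow> 'a) set)" using \<open>\<And>n. gcar (enat n) \<subseteq> gcar \<infinity>\<close> by auto
    thus "openin (top_of_set (gcar (enat n))) (gcar \<infinity> \<inter> (gcar (enat n) :: (nat set \<Rightarrow> 'a) set))"
      by (metis openin_topspace topspace_euclidean_subtopology)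
  qed simp
  hence "gcar \<infinity> \<subseteq> topspace (lambda_top \<infinity> :: (nat set \<Rightarrow> 'a) topology)"
    by (simp add: openin_subset)
  moreover have "topspace (lambda_top \<infinity> :: (nat set \<Rightarrow> 'a) topology) \<subseteq> gcar \<infinity>"
    using openin_lambda_inf openin_topspace by blast
  ultimately show ?thesis using infinity by auto
qed

lemma eval_cont_euc: "continuous_map euclidean euclidean (\<lambda>f::nat set \<Rightarrow> 'r::topological_space. f i)"
  by (metis UNIV_I continuous_map_product_projection euclidean_product_topology)

lemma eval_cont_lambda: "continuous_map (lambda_top m) euclidean (\<lambda>f::nat set \<Rightarrow> 'r::{zero,topological_space}. f i)"
proof (cases m)
  case (enat n) thus ?thesis
    using continuous_on_subset[OF eval_cont_euc[of i, unfolded continuous_map_iff_continuous2] subset_UNIV] by (simp add: lambda_top_def)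
next
  case infinity
  have A: "openin (lambda_top m) {x \<in> topspace (lambda_top m). x i \<in> W}" if "openin euclidean W" for W :: "'r set"
  proof -
    from that have ow: "open W" by simp
    show ?thesis unfolding infinity openin_lambda_inf topspace_lambda
    proof (intro conjI allI)
      show "{x \<in> gcar \<infinity>. x i \<in> W} \<subseteq> gcar \<infinity>" by auto
      fix n
      have "gcar (enat n) \<subseteq> gcar \<infinity>" unfolding gcar_def by auto
      hence "{x \<in> gcar \<infinity>. x i \<in> W} \<inter> gcar (enat n) = gcar (enat n) \<inter> (\<lambda>f. f i) -` W" by auto
      moreover have "open ((\<lambda>f::nat set \<Rightarrow> 'r. f i) -` W)"
        using eval_cont_euc ow by (metis continuous_map_iff_continuous2 open_vimage)
      ultimately show "openin (subtopology euclidean (gcar (enat n))) ({x \<in> gcar \<infinity>. x i \<in> W} \<inter> gcar (enat n))"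
        by (simp add: openin_subtopology_Int2 inf_commute openin_open_Int)
    qed
  qed
  show ?thesis unfolding continuous_map_def using A by auto
qed


lemma cm2:
  assumes "continuous_map X euclidean p" "continuous_map X euclidean q"
    "continuous_on UNIV (\<lambda>z. F (fst z) (snd z))"
  shows "continuous_map X euclidean (\<lambda>x. F (p x) (q x))"
proof -
  have "continuous_map X (prod_topology euclidean euclidean) (\<lambda>x. (p x, q x))"
    using assms by (intro continuous_map_pairedI)
  hence "continuous_map X euclidean (\<lambda>x. (p x, q x))" by simp
  moreover have "continuous_map euclidean euclidean (\<lambda>z. F (fst z) (snd z))" using assms(3) by simp
  ultimately have "continuous_map X euclidean ((\<lambda>z. F (fst z) (snd z)) \<circ> (\<lambda>x. (p x, q x)))"
    by (rule continuous_map_compose)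
  thus ?thesis by (simp add: o_def)
qed

lemma ev_ul: "continuous_map (dewitt_ul m) euclidean (\<lambda>f::nat set \<Rightarrow> 'a::{zero,topological_space} \<times> 'b::zero. fst (f {}))"
  unfolding dewitt_ul_def using continuous_map_pullback[OF continuous_map_id, of "Eul m" "\<lambda>f::nat set \<Rightarrow> 'a \<times> 'b. fst (f {})"]
  by (simp add: o_def)

lemma ev_tens: "continuous_map (dewitt_tens m) euclidean (\<lambda>f::nat set \<Rightarrow> 'v::{zero,topological_space}. f {})"
  unfolding dewitt_tens_def using continuous_map_pullback[OF continuous_map_id, of "gcar m" "\<lambda>f::nat set \<Rightarrow> 'v. f {}"]
  by (simp add: o_def)

lemma pb_ul: "continuous_map X euclidean ((\<lambda>f. fst (f {})) \<circ> g) \<Longrightarrow> topspace X \<subseteq> g -` Eul m \<Longrightarrow> continuous_map X (dewitt_ul m) g"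
  unfolding dewitt_ul_def by (rule continuous_map_pullback')

lemma pb_tens: "continuous_map X euclidean ((\<lambda>f. f {}) \<circ> g) \<Longrightarrow> topspace X \<subseteq> g -` gcar m \<Longrightarrow> continuous_map X (dewitt_tens m) g"
  unfolding dewitt_tens_def by (rule continuous_map_pullback')

lemma cmfst: "continuous_map X euclidean h \<Longrightarrow> continuous_map X euclidean (\<lambda>x. fst (h x))"
  using continuous_map_compose[of X euclidean h euclidean fst]
  by (simp add: o_def continuous_on_fst continuous_on_id)

lemma cmsnd: "continuous_map X euclidean h \<Longrightarrow> continuous_map X euclidean (\<lambda>x. snd (h x))"
  using continuous_map_compose[of X euclidean h euclidean snd]
  by (simp add: o_def continuous_on_snd continuous_on_id)

lemma top_ul: "topspace (dewitt_ul m) = Eul m"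
  unfolding dewitt_ul_def topspace_pullback_topology by simp

lemma top_tens: "topspace (dewitt_tens m) = gcar m"
  unfolding dewitt_tens_def topspace_pullback_topology by simp

lemma gact_empty: "gact sc0 sc1 a f {} = (sc0 (a {}) (fst (f {})), sc1 (a {}) (snd (f {})))"
  unfolding gact_def gsign_def by simp

lemma gact_gcar:
  assumes m0: "module sc0" and m1: "module sc1" and a: "a \<in> gcar m" and f: "f \<in> gcar m"
  shows "gact sc0 sc1 a f \<in> gcar m"
proof -
  obtain n1 n2 where A: "enat n1 \<le> m" "\<forall>I. a I \<noteq> 0 \<longrightarrow> I \<subseteq> {..<n1}"
    and B: "enat n2 \<le> m" "\<forall>I. f I \<noteq> 0 \<longrightarrow> I \<subseteq> {..<n2}" using a f unfolding gcar_def by blast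
  have "enat (max n1 n2) \<le> m" using A B by (simp add: max_def)
  moreover have "K \<subseteq> {..<max n1 n2}" if ne: "gact sc0 sc1 a f K \<noteq> 0" for K
  proof (rule ccontr)
    assume "\<not> K \<subseteq> {..<max n1 n2}"
    then obtain k where k: "k \<in> K" "\<not> k < max n1 n2" by auto
    have "(sc0 (of_int (gsign I (K - I)) * a I) (fst (f (K - I))),
           sc1 (of_int (gsign I (K - I)) * a I) (snd (f (K - I)))) = 0" if I: "I \<in> Pow K" for I
    proof (cases "k \<in> I")
      case True
      hence "a I = 0" using A k by fastforce
      thus ?thesis using module.scale_zero_left[OF m0] module.scale_zero_left[OF m1] by (simp add: zero_prod_def)
    next
      case False
      hence "f (K - I) = 0" using B k by fastforce
      thus ?thesis using module.scale_zero_right[OF m0] module.scale_zero_right[OF m1] by (simp add: zero_prod_def)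
    qed
    hence "gact sc0 sc1 a f K = 0" unfolding gact_def by (simp add: sum.neutral)
    with ne show False by simp
  qed
  ultimately show ?thesis unfolding gcar_def by blast
qed

lemma gact_Eul:
  assumes m0: "module sc0" and m1: "module sc1" and a: "a \<in> lambda0 m" and f: "f \<in> Eul m"
  shows "gact sc0 sc1 a f \<in> Eul m"
proof -
  have ag: "a \<in> gcar m" and ae: "a \<in> geven" using a unfolding lambda0_def by auto
  have fg: "f \<in> gcar m" using f unfolding Eul_def by auto
  obtain n1 where A: "\<forall>I. a I \<noteq> 0 \<longrightarrow> I \<subseteq> {..<n1}" using ag unfolding gcar_def by blast
  have fpar: "odd (card I) \<Longrightarrow> fst (f I) = 0" "even (card I) \<Longrightarrow> snd (f I) = 0" for I
    using f unfolding Eul_def by auto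
  have "(odd (card K) \<longrightarrow> fst (gact sc0 sc1 a f K) = 0) \<and> (even (card K) \<longrightarrow> snd (gact sc0 sc1 a f K) = 0)" for K
  proof (cases "finite K")
    case False
    hence "infinite (Pow K)" by simp
    thus ?thesis unfolding gact_def by simp
  next
    case fin: True
    have t0: "sc0 (of_int (gsign I (K - I)) * a I) (fst (f (K - I))) = 0" if "odd (card K)" "I \<in> Pow K" for I
    proof (cases "a I = 0")
      case True thus ?thesis using module.scale_zero_left[OF m0] by simp
    next
      case False
      hence "even (card I)" using ae unfolding geven_def by auto
      moreover have "card (K - I) = card K - card I" using that fin by (auto intro: card_Diff_subset finite_subset)
      moreover have "card I \<le> card K" using that fin by (auto intro: card_mono)
      ultimately have "odd (card (K - I))" using that by auto
      thus ?thesis using fpar module.scale_zero_right[OF m0] by simp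
    qed
    have t1: "sc1 (of_int (gsign I (K - I)) * a I) (snd (f (K - I))) = 0" if "even (card K)" "I \<in> Pow K" for I
    proof (cases "a I = 0")
      case True thus ?thesis using module.scale_zero_left[OF m1] by (simp add: zero_prod_def)
    next
      case False
      hence "even (card I)" using ae unfolding geven_def by auto
      moreover have "card (K - I) = card K - card I" using that fin by (auto intro: card_Diff_subset finite_subset)
      moreover have "card I \<le> card K" using that fin by (auto intro: card_mono)
      ultimately have "even (card (K - I))" using that by auto
      thus ?thesis using fpar module.scale_zero_right[OF m1] by (simp add: zero_prod_def)
    qed
    show ?thesis unfolding gact_def fst_sum snd_sum using t0 t1 by (simp add: sum.neutral)
  qed
  thus ?thesis unfolding Eul_def using gact_gcar[OF m0 m1 ag fg] by auto
qed


theorem lemma2p5: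
  fixes sc0 :: "'r::{comm_ring_1, topological_ab_group_add, topological_semigroup_mult, t2_space}
                  \<Rightarrow> 'a::{topological_ab_group_add, t2_space} \<Rightarrow> 'a"
    and sc1 :: "'r \<Rightarrow> 'b::{topological_ab_group_add, t2_space} \<Rightarrow> 'b"
    and m :: enat
  assumes dense_units: "closure {u::'r. u dvd 1} = UNIV"
    and mod0: "module sc0" and mod1: "module sc1"
    and cont0: "continuous_on UNIV (\<lambda>p. sc0 (fst p) (snd p))"
    and cont1: "continuous_on UNIV (\<lambda>p. sc1 (fst p) (snd p))"
  shows "(\<forall>U. U \<subseteq> (Eul m :: (nat set \<Rightarrow> 'a \<times> 'b) set) \<longrightarrow>
            (openin (dewitt_ul m) U \<longleftrightarrow>
             (\<exists>V. open V \<and> U = {fadd (tens1 (v, 0)) x | v x. v \<in> V \<and> x \<in> Eul_plus m})))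
       \<and> (\<forall>U. U \<subseteq> (gcar m :: (nat set \<Rightarrow> 'a \<times> 'b) set) \<longrightarrow>
            (openin (dewitt_tens m) U \<longleftrightarrow>
             (\<exists>V. open V \<and> U = {fadd (tens1 v) x | v x. v \<in> V \<and> x \<in> Etens_plus m})))
       \<and> continuous_map (prod_topology (dewitt_ul m) (dewitt_ul m)) (dewitt_ul m)
            (\<lambda>(x, y). fadd x (y :: nat set \<Rightarrow> 'a \<times> 'b))
       \<and> continuous_map (prod_topology (subtopology (lambda_top m) (lambda0 m)) (dewitt_ul m)) (dewitt_ul m)
            (\<lambda>(a, f). gact sc0 sc1 (a :: nat set \<Rightarrow> 'r) (f :: nat set \<Rightarrow> 'a \<times> 'b))
       \<and> continuous_map (prod_topology (dewitt_tens m) (dewitt_tens m)) (dewitt_tens m)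
            (\<lambda>(x, y). fadd x (y :: nat set \<Rightarrow> 'a \<times> 'b))
       \<and> continuous_map (prod_topology (lambda_top m) (dewitt_tens m)) (dewitt_tens m)
            (\<lambda>(a, f). gact sc0 sc1 (a :: nat set \<Rightarrow> 'r) (f :: nat set \<Rightarrow> 'a \<times> 'b))"
  proof -
  have P1: "openin (dewitt_ul m) U \<longleftrightarrow>
             (\<exists>V. open V \<and> U = {fadd (tens1 (v, 0)) x | v x. v \<in> V \<and> x \<in> Eul_plus m})"
    if "U \<subseteq> (Eul m :: (nat set \<Rightarrow> 'a \<times> 'b) set)" for U
    unfolding set_ul dewitt_ul_def openin_pullback_topology using that by (auto simp: vimage_def)
  have P2: "openin (dewitt_tens m) U \<longleftrightarrow>
             (\<exists>V. open V \<and> U = {fadd (tens1 v) x | v x. v \<in> V \<and> x \<in> Etens_plus m})"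
    if "U \<subseteq> (gcar m :: (nat set \<Rightarrow> 'a \<times> 'b) set)" for U
    unfolding set_tens dewitt_tens_def openin_pullback_topology using that by (auto simp: vimage_def)
  have P3: "continuous_map (prod_topology (dewitt_ul m) (dewitt_ul m)) (dewitt_ul m)
            (\<lambda>(x, y). fadd x (y :: nat set \<Rightarrow> 'a \<times> 'b))"
  proof (rule pb_ul)
    show "topspace (prod_topology (dewitt_ul m) (dewitt_ul m)) \<subseteq> (\<lambda>(x, y). fadd x (y :: nat set \<Rightarrow> 'a \<times> 'b)) -` Eul m"
      by (auto simp: top_ul intro: Eul_fadd)
    have "continuous_map (prod_topology (dewitt_ul m) (dewitt_ul m)) euclidean
       (\<lambda>p. fst (fst p {}) + fst ((snd p :: nat set \<Rightarrow> 'a \<times> 'b) {}))"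
      by (rule cm2[where F="(+)", OF continuous_map_compose[OF continuous_map_fst ev_ul, unfolded o_def]
          continuous_map_compose[OF continuous_map_snd ev_ul, unfolded o_def]], intro continuous_intros)
    moreover have "(\<lambda>f. fst (f {})) \<circ> (\<lambda>(x, y). fadd x (y :: nat set \<Rightarrow> 'a \<times> 'b))
        = (\<lambda>p. fst (fst p {}) + fst ((snd p :: nat set \<Rightarrow> 'a \<times> 'b) {}))"
      by (auto simp: fadd_def fun_eq_iff)
    ultimately show "continuous_map (prod_topology (dewitt_ul m) (dewitt_ul m)) euclidean
      ((\<lambda>f. fst (f {})) \<circ> (\<lambda>(x, y). fadd x (y :: nat set \<Rightarrow> 'a \<times> 'b)))" by simp
  qed
  have P4: "continuous_map (prod_topology (subtopology (lambda_top m) (lambda0 m)) (dewitt_ul m)) (dewitt_ul m)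
            (\<lambda>(a, f). gact sc0 sc1 (a :: nat set \<Rightarrow> 'r) (f :: nat set \<Rightarrow> 'a \<times> 'b))"
  proof (rule pb_ul)
    show "topspace (prod_topology (subtopology (lambda_top m) (lambda0 m)) (dewitt_ul m)) \<subseteq> (\<lambda>(a, f). gact sc0 sc1 (a :: nat set \<Rightarrow> 'r) (f :: nat set \<Rightarrow> 'a \<times> 'b)) -` Eul m"
      by (auto simp: top_ul intro: gact_Eul[OF mod0 mod1])
    have ca: "continuous_map (subtopology (lambda_top m) (lambda0 m)) euclidean (\<lambda>a::nat set \<Rightarrow> 'r. a {})"
      by (rule continuous_map_from_subtopology[OF eval_cont_lambda])
    have "continuous_map (prod_topology (subtopology (lambda_top m) (lambda0 m)) (dewitt_ul m)) euclidean
       (\<lambda>p. sc0 ((fst p :: nat set \<Rightarrow> 'r) {}) (fst ((snd p :: nat set \<Rightarrow> 'a \<times> 'b) {})))"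
      by (rule cm2[where F=sc0, OF continuous_map_compose[OF continuous_map_fst ca, unfolded o_def]
          continuous_map_compose[OF continuous_map_snd ev_ul, unfolded o_def] cont0])
    moreover have "(\<lambda>f. fst (f {})) \<circ> (\<lambda>(a, f). gact sc0 sc1 (a :: nat set \<Rightarrow> 'r) (f :: nat set \<Rightarrow> 'a \<times> 'b))
        = (\<lambda>p. sc0 ((fst p :: nat set \<Rightarrow> 'r) {}) (fst ((snd p :: nat set \<Rightarrow> 'a \<times> 'b) {})))"
      by (auto simp: gact_empty fun_eq_iff)
    ultimately show "continuous_map (prod_topology (subtopology (lambda_top m) (lambda0 m)) (dewitt_ul m)) euclidean
      ((\<lambda>f. fst (f {})) \<circ> (\<lambda>(a, f). gact sc0 sc1 (a :: nat set \<Rightarrow> 'r) (f :: nat set \<Rightarrow> 'a \<times> 'b)))" by simp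
  qed
  have P5: "continuous_map (prod_topology (dewitt_tens m) (dewitt_tens m)) (dewitt_tens m)
            (\<lambda>(x, y). fadd x (y :: nat set \<Rightarrow> 'a \<times> 'b))"
  proof (rule pb_tens)
    show "topspace (prod_topology (dewitt_tens m) (dewitt_tens m)) \<subseteq> (\<lambda>(x, y). fadd x (y :: nat set \<Rightarrow> 'a \<times> 'b)) -` gcar m"
      by (auto simp: top_tens intro: gcar_fadd)
    have c0: "continuous_on UNIV (\<lambda>z::('a \<times> 'b) \<times> ('a \<times> 'b). fst z + snd z)"
    proof -
      have eq: "(\<lambda>z::('a \<times> 'b) \<times> ('a \<times> 'b). fst z + snd z) = (\<lambda>z. (fst (fst z) + fst (snd z), snd (fst z) + snd (snd z)))"
        by (auto simp: fun_eq_iff prod_eq_iff)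
      have cc: "continuous_on UNIV (\<lambda>z::('a \<times> 'b) \<times> ('a \<times> 'b). (fst (fst z) + fst (snd z), snd (fst z) + snd (snd z)))"
        by (intro continuous_intros)
      show ?thesis by (subst eq) (rule cc)
    qed
    have "continuous_map (prod_topology (dewitt_tens m) (dewitt_tens m)) euclidean
       (\<lambda>p. (fst p {}) + ((snd p :: nat set \<Rightarrow> 'a \<times> 'b) {}))"
      by (rule cm2[where F="(+)", OF continuous_map_compose[OF continuous_map_fst ev_tens, unfolded o_def]
          continuous_map_compose[OF continuous_map_snd ev_tens, unfolded o_def] c0])
    moreover have "(\<lambda>f. f {}) \<circ> (\<lambda>(x, y). fadd x (y :: nat set \<Rightarrow> 'a \<times> 'b))
        = (\<lambda>p. (fst p {}) + ((snd p :: nat set \<Rightarrow> 'a \<times> 'b) {}))"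
      by (auto simp: fadd_def fun_eq_iff)
    ultimately show "continuous_map (prod_topology (dewitt_tens m) (dewitt_tens m)) euclidean
      ((\<lambda>f. f {}) \<circ> (\<lambda>(x, y). fadd x (y :: nat set \<Rightarrow> 'a \<times> 'b)))" by simp
  qed
  have P6: "continuous_map (prod_topology (lambda_top m) (dewitt_tens m)) (dewitt_tens m)
            (\<lambda>(a, f). gact sc0 sc1 (a :: nat set \<Rightarrow> 'r) (f :: nat set \<Rightarrow> 'a \<times> 'b))"
  proof (rule pb_tens)
    show "topspace (prod_topology (lambda_top m) (dewitt_tens m)) \<subseteq> (\<lambda>(a, f). gact sc0 sc1 (a :: nat set \<Rightarrow> 'r) (f :: nat set \<Rightarrow> 'a \<times> 'b)) -` gcar m"
      by (auto simp: top_tens topspace_lambda intro: gact_gcar[OF mod0 mod1])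
    have ca: "continuous_map (prod_topology (lambda_top m) (dewitt_tens m)) euclidean (\<lambda>p. (fst p :: nat set \<Rightarrow> 'r) {})"
      by (rule continuous_map_compose[OF continuous_map_fst eval_cont_lambda, unfolded o_def])
    have cf: "continuous_map (prod_topology (lambda_top m) (dewitt_tens m)) euclidean (\<lambda>p. (snd p :: nat set \<Rightarrow> 'a \<times> 'b) {})"
      by (rule continuous_map_compose[OF continuous_map_snd ev_tens, unfolded o_def])
    have cf0: "continuous_map (prod_topology (lambda_top m) (dewitt_tens m)) euclidean (\<lambda>p. fst ((snd p :: nat set \<Rightarrow> 'a \<times> 'b) {}))"
      by (rule cmfst[OF cf])
    have cf1: "continuous_map (prod_topology (lambda_top m) (dewitt_tens m)) euclidean (\<lambda>p. snd ((snd p :: nat set \<Rightarrow> 'a \<times> 'b) {}))"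
      by (rule cmsnd[OF cf])
    have "continuous_map (prod_topology (lambda_top m) (dewitt_tens m)) (prod_topology euclidean euclidean)
       (\<lambda>p. (sc0 ((fst p :: nat set \<Rightarrow> 'r) {}) (fst ((snd p :: nat set \<Rightarrow> 'a \<times> 'b) {})),
              sc1 ((fst p :: nat set \<Rightarrow> 'r) {}) (snd ((snd p :: nat set \<Rightarrow> 'a \<times> 'b) {}))))"
      by (intro continuous_map_pairedI cm2[where F=sc0, OF ca cf0 cont0] cm2[where F=sc1, OF ca cf1 cont1])
    moreover have "(\<lambda>f. f {}) \<circ> (\<lambda>(a, f). gact sc0 sc1 (a :: nat set \<Rightarrow> 'r) (f :: nat set \<Rightarrow> 'a \<times> 'b))
        = (\<lambda>p. (sc0 ((fst p :: nat set \<Rightarrow> 'r) {}) (fst ((snd p :: nat set \<Rightarrow> 'a \<times> 'b) {})),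
              sc1 ((fst p :: nat set \<Rightarrow> 'r) {}) (snd ((snd p :: nat set \<Rightarrow> 'a \<times> 'b) {}))))"
      by (auto simp: gact_empty fun_eq_iff)
    ultimately show "continuous_map (prod_topology (lambda_top m) (dewitt_tens m)) euclidean
      ((\<lambda>f. f {}) \<circ> (\<lambda>(a, f). gact sc0 sc1 (a :: nat set \<Rightarrow> 'r) (f :: nat set \<Rightarrow> 'a \<times> 'b)))" by simp
  qed
  show ?thesis using P1 P2 P3 P4 P5 P6 by blast
qed

end
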